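(* Let $-1<D<C\le 1$ and let $\alpha_1,\alpha_2>0$ satisfy $$(\alpha_1-\alpha_2)(1-D^2)\ \ge\ e\,(C-D)(1+|D|).$$ Let $p$ be analytic in $\mathbb{D}$ with $p(0)=1$. If $$1+\alpha_1 z p'(z)+\alpha_2 z^2 p''(z)\prec \frac{1+Cz}{1+Dz}\qquad (z\in\mathbb{D}),$$ then $p(z)\prec e^z$.
   Context: $\mathbb{D}=\{z\in\mathbb{C}:|z|<1\}$. For functions $g,h$ analytic in $\mathbb{D}$, $g\prec h$ ($g$ is subordinate to $h$) means there is an analytic $w:\mathbb{D}\to\mathbb{D}$ with $w(0)=0$ and $g=h\circ w$; when $h$ is univalent this is equivalent to $g(0)=h(0)$ and $g(\mathbb{D})\subseteq h(\mathbb{D})$. *)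

theory Defs
  imports "HOL-Complex_Analysis.Complex_Analysis"
begin

definition unit_disc :: "complex set" where
  "unit_disc = ball 0 1"

definition subordinate :: "(complex \<Rightarrow> complex) \<Rightarrow> (complex \<Rightarrow> complex) \<Rightarrow> bool"
  (infix "\<prec>\<^sub>s" 50) where
  "g \<prec>\<^sub>s h \<longleftrightarrow> (\<exists>w. w holomorphic_on unit_disc \<and> w ` unit_disc \<subseteq> unit_disc \<and> w 0 = 0
                  \<and> (\<forall>z\<in>unit_disc. g z = h (w z)))"

end

theory Submission
  imports Defs
begin

lemma ray_max_deriv:
  fixes v :: "complex \<Rightarrow> complex"
  assumes hol: "v holomorphic_on ball 0 1" and z0b: "norm z0 < 1"
    and mx: "\<And>t::real. 0 \<le> t \<Longrightarrow> t \<le> 1 \<Longrightarrow> norm (v (of_real t * z0)) \<le> norm (v z0)"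
  shows "Re (cnj (v z0) * deriv v z0 * z0) \<ge> 0"
proof (rule ccontr)
  assume neg: "\<not> ?thesis"
  define c where "c = cnj (v z0)"
  define h where "h = (\<lambda>t::real. Re (c * v (of_real t * z0)))"
  have dv: "(v has_field_derivative deriv v z0) (at z0)"
    using hol z0b by (simp add: DERIV_deriv_iff_field_differentiable holomorphic_on_imp_differentiable_at)
  have d1: "((\<lambda>s. c * v (s * z0)) has_field_derivative c * (deriv v z0 * z0)) (at (of_real 1))"
  proof -
    have "((\<lambda>s. s * z0) has_field_derivative z0) (at 1)"
      by (rule derivative_eq_intros refl | simp)+
    hence "((\<lambda>s. v (s * z0)) has_field_derivative deriv v z0 * z0) (at 1)"
      using DERIV_chain[of v "deriv v z0" "\<lambda>s. s * z0" 1] dv by (auto simp: o_def)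
    thus ?thesis by (auto intro: DERIV_cmult)
  qed
  have "(h has_real_derivative Re (c * (deriv v z0 * z0))) (at 1)"
    unfolding h_def using has_field_derivative_Re[OF has_vector_derivative_real_field[OF d1]] by simp
  moreover have "Re (c * (deriv v z0 * z0)) < 0" using neg by (simp add: c_def mult.assoc)
  ultimately obtain d where d: "d > 0" "\<forall>e>0. e < d \<longrightarrow> h 1 < h (1 - e)"
    using DERIV_neg_dec_left by blast
  define e where "e = min (d/2) (1/2)"
  have "h 1 < h (1 - e)" using d e_def by auto
  moreover have "h (1 - e) \<le> norm c * norm (v (of_real (1-e) * z0))"
    unfolding h_def by (metis complex_Re_le_cmod norm_mult)
  moreover have "norm (v (of_real (1-e) * z0)) \<le> norm (v z0)" using mx[of "1-e"] d(1) unfolding e_def by (simp add: min_def)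
  moreover have "h 1 = norm (v z0) ^ 2" unfolding h_def c_def
    using cmod_power2[of "v z0"] by (simp add: power2_eq_square)
  ultimately show False
    by (smt (verit, best) c_def complex_mod_cnj mult_left_mono norm_ge_zero power2_eq_square)
qed

lemma v_bound:
  fixes v :: "complex \<Rightarrow> complex" and a b M :: real
  assumes hol: "v holomorphic_on ball 0 1" and a: "a > 0" and b: "b > 0" and M: "M \<ge> 0"
    and eq: "\<And>z. norm z < 1 \<Longrightarrow> norm (of_real a * z * deriv v z + of_real b * v z) \<le> M * norm z"
    and z: "norm z < 1"
  shows "norm (v z) \<le> M / b * norm z"
proof -
  define r where "r = norm z"
  have sub: "cball 0 r \<subseteq> ball 0 1" using z r_def by auto
  have "continuous_on (cball 0 r) (\<lambda>y. norm (v y))"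
    using holomorphic_on_imp_continuous_on[OF holomorphic_on_subset[OF hol sub]]
    by (intro continuous_intros)
  then obtain z0 where z0: "z0 \<in> cball 0 r" and mx: "\<And>y. y \<in> cball 0 r \<Longrightarrow> norm (v y) \<le> norm (v z0)"
    using continuous_attains_sup[of "cball 0 r" "\<lambda>y. norm (v y)"] r_def by (metis compact_cball cball_eq_empty norm_ge_zero not_less)
  have z0n: "norm z0 \<le> r" using z0 by simp
  have z0b: "norm z0 < 1" using z0n z r_def by simp
  have ray: "Re (cnj (v z0) * deriv v z0 * z0) \<ge> 0"
  proof (rule ray_max_deriv[OF hol z0b])
    fix t :: real assume "0 \<le> t" "t \<le> 1"
    hence "norm (of_real t * z0) \<le> r" using z0n
      by (simp add: norm_mult) (metis mult_left_le_one_le norm_ge_zero order_trans)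
    thus "norm (v (of_real t * z0)) \<le> norm (v z0)" using mx by simp
  qed
  define c where "c = cnj (v z0)"
  have "c * (of_real a * z0 * deriv v z0 + of_real b * v z0)
        = of_real a * (cnj (v z0) * deriv v z0 * z0) + of_real b * (c * v z0)"
    by (simp add: c_def algebra_simps)
  hence "Re (c * (of_real a * z0 * deriv v z0 + of_real b * v z0))
        = a * Re (cnj (v z0) * deriv v z0 * z0) + b * norm (v z0) ^ 2"
    using cmod_power2[of "v z0"] by (simp add: c_def power2_eq_square)
  hence "b * norm (v z0) ^ 2 \<le> Re (c * (of_real a * z0 * deriv v z0 + of_real b * v z0))"
    using ray a by (simp add: mult_nonneg_nonneg)
  also have "\<dots> \<le> norm c * norm (of_real a * z0 * deriv v z0 + of_real b * v z0)"
    by (metis complex_Re_le_cmod norm_mult)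
  also have "\<dots> \<le> norm (v z0) * (M * r)"
  proof -
    have "norm (of_real a * z0 * deriv v z0 + of_real b * v z0) \<le> M * norm z0" using eq z0b .
    also have "\<dots> \<le> M * r"
      using z0n M by (auto intro: mult_left_mono simp: r_def)
    finally show ?thesis by (simp add: c_def mult_left_mono)
  qed
  finally have key: "b * norm (v z0) ^ 2 \<le> norm (v z0) * (M * r)" .
  have "norm (v z0) \<le> M * r / b"
  proof (cases "v z0 = 0")
    case True
    have "0 \<le> M * r"
      using M r_def by simp
    thus ?thesis using True b by simp
  next
    case False
    hence pos: "norm (v z0) > 0" by simp
    have "norm (v z0) * (b * norm (v z0)) \<le> norm (v z0) * (M * r)" using key
      by (simp add: power2_eq_square algebra_simps)
    hence "b * norm (v z0) \<le> M * r" using pos mult_le_cancel_left_pos by blast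
    thus ?thesis using b by (simp add: field_simps)
  qed
  moreover have "norm (v z) \<le> norm (v z0)" using mx r_def by simp
  ultimately show ?thesis by (simp add: r_def)
qed
lemma Ln_small:
  fixes u :: complex
  assumes "norm u \<le> exp (-1)"
  shows "norm (Ln (1 + u)) < 1"
proof -
  have e: "exp (-1::real) < 1/2"
  proof -
    have "2 < exp (1::real)" using exp_gt_one[of 1] exp_ge_add_one_self[of 1] 
      by (smt (verit) exp_less_mono exp_ln ln_2_less_1)
    thus ?thesis by (simp add: exp_minus field_simps)
  qed
  define x where "x = norm u"
  have x: "0 \<le> x" "x < 1/2" using assms e x_def by auto
  have "norm (Ln (1 + u) - u) \<le> x^2 / (1 - x)" using Ln_approx_linear[of u] x x_def by simp
  hence "norm (Ln (1 + u)) \<le> x + x^2 / (1 - x)" using norm_triangle_ineq2[of "Ln (1+u)" u] x_def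
    by linarith
  also have "x + x^2/(1-x) = x / (1 - x)" using x by (simp add: field_simps power2_eq_square)
  also have "\<dots> < 1" using x by (simp add: field_simps)
  finally show ?thesis .
qed

theorem theorem4p1:
  fixes C D \<alpha>1 \<alpha>2 :: real and p :: "complex \<Rightarrow> complex"
  assumes "-1 < D" "D < C" "C \<le> 1"
    and "\<alpha>1 > 0" "\<alpha>2 > 0"
    and "(\<alpha>1 - \<alpha>2) * (1 - D\<^sup>2) \<ge> exp 1 * (C - D) * (1 + \<bar>D\<bar>)"
    and "p holomorphic_on unit_disc" and "p 0 = 1"
    and "(\<lambda>z. 1 + of_real \<alpha>1 * z * deriv p z + of_real \<alpha>2 * z\<^sup>2 * deriv (deriv p) z)
           \<prec>\<^sub>s (\<lambda>z. (1 + of_real C * z) / (1 + of_real D * z))"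
  shows "p \<prec>\<^sub>s exp"
proof -
  note D1 = assms(1) and DC = assms(2) and C1 = assms(3) and a1 = assms(4) and a2 = assms(5)
    and cond = assms(6) and pp0 = assms(8)
  have holp: "p holomorphic_on ball 0 1" using assms(7) by (simp add: unit_disc_def)
  obtain w where holw: "w holomorphic_on ball 0 1" and wD: "w ` ball 0 1 \<subseteq> ball 0 1"
    and w0: "w 0 = 0"
    and qw: "\<And>z. norm z < 1 \<Longrightarrow> 1 + of_real \<alpha>1 * z * deriv p z + of_real \<alpha>2 * z\<^sup>2 * deriv (deriv p) z
              = (1 + of_real C * w z) / (1 + of_real D * w z)"
    using assms(9) unfolding subordinate_def unit_disc_def by auto
  have Dabs: "\<bar>D\<bar> < 1" using D1 DC C1 by auto
  have e1: "exp (1::real) > 0" by simp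
  have "(1 - D\<^sup>2) = (1 - \<bar>D\<bar>) * (1 + \<bar>D\<bar>)"
    by (simp add: algebra_simps power2_eq_square abs_mult_self_eq)
  hence cond2: "(\<alpha>1 - \<alpha>2) * (1 - \<bar>D\<bar>) \<ge> exp 1 * (C - D)"
    using cond Dabs by (smt (verit, ccfv_SIG) mult.assoc mult.commute mult_le_cancel_right_pos)
  have "exp 1 * (C - D) > 0" using DC by simp
  hence ab: "\<alpha>1 - \<alpha>2 > 0" using cond2 Dabs
    by (smt (verit) mult_nonpos_nonneg)
  define M where "M = (C - D) / (1 - \<bar>D\<bar>)"
  define K where "K = M / (\<alpha>1 - \<alpha>2)"
  have M0: "M \<ge> 0" using DC Dabs by (simp add: M_def)
  have K: "K \<le> exp (-1)"
  proof -
    have "K = (C - D) / ((1 - \<bar>D\<bar>) * (\<alpha>1 - \<alpha>2))" by (simp add: K_def M_def)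
    also have "\<dots> \<le> exp (-1)"
    proof -
      have P: "(1 - \<bar>D\<bar>) * (\<alpha>1 - \<alpha>2) > 0" using Dabs ab by simp
      have "C - D = exp (-1) * (exp 1 * (C - D))" by (simp add: exp_minus)
      also have "\<dots> \<le> exp (-1) * ((1 - \<bar>D\<bar>) * (\<alpha>1 - \<alpha>2))"
        using cond2 by (simp add: mult.commute)
      finally show ?thesis using P by (simp add: divide_le_eq)
    qed
    finally show ?thesis .
  qed
  have schw: "norm (w z) \<le> norm z" if "norm z < 1" for z
  proof (rule Schwarz_Lemma(1)[OF holw w0 _ that])
    fix y :: complex assume "norm y < 1"
    hence "y \<in> ball 0 1" by simp
    hence "w y \<in> ball 0 1" using wD by blast
    thus "norm (w y) < 1" by simp
  qed
  have holdp: "deriv p holomorphic_on ball 0 1" using holp by (rule holomorphic_deriv) simp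
  define v where "v = (\<lambda>z. z * deriv p z)"
  have holv: "v holomorphic_on ball 0 1" unfolding v_def by (intro holomorphic_intros holdp)
  have dv: "deriv v z = deriv p z + z * deriv (deriv p) z" if "norm z < 1" for z
  proof -
    have "(deriv p has_field_derivative deriv (deriv p) z) (at z)"
      using holdp that by (simp add: DERIV_deriv_iff_field_differentiable holomorphic_on_imp_differentiable_at)
    from DERIV_mult[OF DERIV_ident this] show ?thesis
      unfolding v_def by (auto dest!: DERIV_imp_deriv simp: algebra_simps)
  qed
  have eq: "norm (of_real \<alpha>2 * z * deriv v z + of_real (\<alpha>1 - \<alpha>2) * v z) \<le> M * norm z"
    if z: "norm z < 1" for z
  proof -
    have wz: "norm (w z) \<le> norm z" using schw z .
    have "norm (of_real D * w z) \<le> \<bar>D\<bar> * norm z" using wz by (simp add: norm_mult mult_left_mono)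
    also have "\<dots> \<le> \<bar>D\<bar>" using z by (simp add: mult_left_le)
    finally have Dw: "norm (of_real D * w z) \<le> \<bar>D\<bar>" .
    have den: "norm (1 + of_real D * w z) \<ge> 1 - \<bar>D\<bar>"
      using norm_triangle_ineq2[of 1 "- (of_real D * w z)"] Dw by (simp add: norm_minus_commute)
    hence nz: "1 + of_real D * w z \<noteq> 0" using Dabs by auto
    have "of_real \<alpha>2 * z * deriv v z + of_real (\<alpha>1 - \<alpha>2) * v z
          = of_real \<alpha>1 * z * deriv p z + of_real \<alpha>2 * z\<^sup>2 * deriv (deriv p) z"
      using dv[OF z] by (simp add: v_def algebra_simps power2_eq_square)
    also have "\<dots> = (1 + of_real C * w z) / (1 + of_real D * w z) - 1" unfolding qw[OF z, symmetric] by simp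
    also have "\<dots> = of_real (C - D) * w z / (1 + of_real D * w z)" using nz
      by (simp add: field_simps)
    finally have "norm (of_real \<alpha>2 * z * deriv v z + of_real (\<alpha>1 - \<alpha>2) * v z)
        = (C - D) * norm (w z) / norm (1 + of_real D * w z)" using DC by (simp add: norm_mult norm_divide del: of_real_diff)
    also have "\<dots> \<le> (C - D) * norm z / (1 - \<bar>D\<bar>)"
      using DC Dabs wz den by (intro frac_le) (auto intro: mult_left_mono)
    also have "\<dots> = M * norm z" by (simp add: M_def)
    finally show ?thesis .
  qed
  have vb: "norm (v z) \<le> K * norm z" if "norm z < 1" for z
    using v_bound[OF holv a2 ab M0 eq that] by (simp add: K_def)
  have K0: "K \<ge> 0" using M0 ab by (simp add: K_def)
  have dpb: "norm (deriv p z) \<le> K" if z: "norm z < 1" for z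
  proof (cases "z = 0")
    case False
    have "norm z * norm (deriv p z) \<le> norm z * K" using vb[OF z] by (simp add: v_def norm_mult mult.commute)
    thus ?thesis using False by simp
  next
    case True
    have "isCont (deriv p) 0"
      using continuous_on_interior[OF holomorphic_on_imp_continuous_on[OF holdp], of 0] by simp
    hence lim: "(deriv p \<longlongrightarrow> deriv p 0) (at 0)" by (simp add: isCont_def)
    have ev: "eventually (\<lambda>x. norm (deriv p x) \<le> K) (at (0::complex))"
      unfolding eventually_at
    proof (intro exI[of _ 1] conjI allI impI ballI)
      fix x :: complex assume "x \<in> UNIV" "x \<noteq> 0 \<and> dist x 0 < 1"
      hence x: "x \<noteq> 0" "norm x < 1" by auto
      have "norm x * norm (deriv p x) \<le> norm x * K" using vb[OF x(2)] by (simp add: v_def norm_mult mult.commute)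
      thus "norm (deriv p x) \<le> K" using x by simp
    qed simp
    show ?thesis using Lim_norm_ubound[OF _ lim ev] True by simp
  qed
  have pb: "norm (p z - 1) \<le> exp (-1)" if z: "norm z < 1" for z
  proof -
    have "norm (p z - p 0) \<le> K * norm (z - 0)"
    proof (rule field_differentiable_bound[where f=p and f'="deriv p" and B=K and S="ball 0 1"])
      fix x assume "x \<in> ball (0::complex) 1"
      thus "(p has_field_derivative deriv p x) (at x within ball 0 1)"
        using holp by (simp add: DERIV_deriv_iff_field_differentiable holomorphic_on_imp_differentiable_at
            has_field_derivative_at_within)
      show "norm (deriv p x) \<le> K" using \<open>x \<in> ball 0 1\<close> dpb by simp
    qed (use z in auto)
    hence "norm (p z - 1) \<le> K * norm z" using pp0 by simp
    also have "\<dots> \<le> K" using z K0 by (simp add: mult_left_le)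
    finally show ?thesis using K by simp
  qed
  show ?thesis unfolding subordinate_def unit_disc_def
  proof (intro exI[of _ "\<lambda>z. Ln (p z)"] conjI ballI)
    have nr: "p z \<notin> \<real>\<^sub>\<le>\<^sub>0" if "z \<in> ball 0 1" for z
    proof -
      have "norm (p z - 1) \<le> exp (-1)" using pb that by simp
      moreover have "exp (-1::real) < 1" by simp
      ultimately have "Re (1 - p z) < 1"
        by (smt (verit) complex_Re_le_cmod norm_minus_commute)
      hence "Re (p z) > 0" by simp
      thus ?thesis by (auto simp: complex_nonpos_Reals_iff)
    qed
    show "(\<lambda>z. Ln (p z)) holomorphic_on ball 0 1" using nr holp by (intro holomorphic_on_Ln') auto
    show "(\<lambda>z. Ln (p z)) ` ball 0 1 \<subseteq> ball 0 1"
    proof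
      fix y assume "y \<in> (\<lambda>z. Ln (p z)) ` ball 0 1"
      then obtain z where z: "z \<in> ball 0 1" "y = Ln (p z)" by auto
      have "norm (Ln (1 + (p z - 1))) < 1" using Ln_small[OF pb] z by simp
      thus "y \<in> ball 0 1" using z by simp
    qed
    show "Ln (p 0) = 0" using pp0 by simp
    fix z assume "z \<in> ball (0::complex) 1"
    hence "p z \<notin> \<real>\<^sub>\<le>\<^sub>0" using nr by blast
    hence "p z \<noteq> 0" by auto
    thus "p z = exp (Ln (p z))" by simp
  qed
qed

end
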